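(* Let $d,k\ge1$, $0<\alpha<1$, $v>0$, $\eta>0$, $R>0$. Let $S=\{(\mathbf{x}_1,y_1),\dots,(\mathbf{x}_n,y_n)\}$ with $\|\mathbf{x}_i\|\le 1$, $y_i\in\{\pm1\}$, and suppose $\mathbf{w}^*\in\mathbb{R}^d$ satisfies $y_i\langle\mathbf{w}^*,\mathbf{x}_i\rangle\ge 1$ for all $i$. Run SGD (as described in the context) on $L_S$ starting from $W_0$ whose rows all have Euclidean norm at most $R$. Then SGD converges to a global minimum of $L_S$ after performing at most $$M_k=\frac{\|\mathbf{w}^*\|^2}{\alpha^2}+\frac{\|\mathbf{w}^*\|^2}{k\eta v^2\alpha^2}+\frac{\sqrt{R(8k^2\eta^2v^2+8\eta k)}\,\|\mathbf{w}^*\|^{1.5}}{2k(\eta v\alpha)^{1.5}}+\frac{2R\|\mathbf{w}^*\|}{\eta v\alpha}$$ non-zero updates.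
   Context: The network is $N_W(\mathbf{x})=\mathbf{v}^\top\sigma(W\mathbf{x})$ with $W\in\mathbb{R}^{2k\times d}$, $\sigma(z)=\max\{\alpha z,z\}$ (Leaky ReLU) applied entrywise, and fixed second layer $\mathbf{v}=(v,\dots,v,-v,\dots,-v)\in\mathbb{R}^{2k}$ ($k$ copies of $v$ then $k$ copies of $-v$). The loss is $L_S(W)=\frac1n\sum_i\max\{1-y_iN_W(\mathbf{x}_i),0\}$. Write $\mathbf{w}^{(i)}_t$ for the $i$-th row and $\mathbf{u}^{(i)}_t$ for the $(k+i)$-th row of $W_t$ ($1\le i\le k$). SGD with batch size 1 and constant learning rate $\eta$ only updates $W$: at iteration $t$ it picks an example $(\mathbf{x}_t,y_t)\in S$ and sets $W_t=W_{t-1}-\eta\,\partial_W \max\{1-y_tN_{W_{t-1}}(\mathbf{x}_t),0\}$. Concretely, if $y_tN_{W_{t-1}}(\mathbf{x}_t)\ge1$ nothing changes; otherwise $\mathbf{w}^{(i)}_t=\mathbf{w}^{(i)}_{t-1}+\eta v p^{(i)}_t y_t\mathbf{x}_t$ and $\mathbf{u}^{(i)}_t=\mathbf{u}^{(i)}_{t-1}-\eta v q^{(i)}_t y_t\mathbf{x}_t$, where $p^{(i)}_t=1$ if $\langle\mathbf{w}^{(i)}_{t-1},\mathbf{x}_t\rangle\ge0$ and $\alpha$ otherwise, and $q^{(i)}_t=1$ if $\langle\mathbf{u}^{(i)}_{t-1},\mathbf{x}_t\rangle\ge0$ and $\alpha$ otherwise. An update is non-zero if this gradient is nonzero (equivalently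 $y_tN_{W_{t-1}}(\mathbf{x}_t)<1$). *)

theory Defs
  imports "HOL-Analysis.Analysis"
begin

text \<open>Weights W of the first layer: a pair (w, u) where w i is the i-th row and
  u i is the (k+i)-th row, for i < k (0-based indices; indices \<ge> k are ignored).\<close>
type_synonym 'a weights = "(nat \<Rightarrow> 'a) \<times> (nat \<Rightarrow> 'a)"

definition leaky_relu :: "real \<Rightarrow> real \<Rightarrow> real" where
  "leaky_relu \<alpha> z = max (\<alpha> * z) z"

definition net :: "nat \<Rightarrow> real \<Rightarrow> real \<Rightarrow> 'a::real_inner weights \<Rightarrow> 'a \<Rightarrow> real" where
  "net k \<alpha> v W x =
     (\<Sum>i<k. v * leaky_relu \<alpha> (inner (fst W i) x)) +
     (\<Sum>i<k. (- v) * leaky_relu \<alpha> (inner (snd W i) x))"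

definition loss :: "nat \<Rightarrow> real \<Rightarrow> real \<Rightarrow> nat \<Rightarrow> (nat \<Rightarrow> 'a::real_inner) \<Rightarrow> (nat \<Rightarrow> real)
                     \<Rightarrow> 'a weights \<Rightarrow> real" where
  "loss k \<alpha> v n xs ys W = (1 / real n) * (\<Sum>i<n. max (1 - ys i * net k \<alpha> v W (xs i)) 0)"

definition sgd_step :: "nat \<Rightarrow> real \<Rightarrow> real \<Rightarrow> real \<Rightarrow> 'a::real_inner weights \<Rightarrow> 'a \<Rightarrow> real
                        \<Rightarrow> 'a weights" where
  "sgd_step k \<alpha> v \<eta> W x y =
     (if y * net k \<alpha> v W x \<ge> 1 then W
      else ((\<lambda>i. fst W i + (\<eta> * v * (if inner (fst W i) x \<ge> 0 then 1 else \<alpha>) * y) *\<^sub>R x),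
            (\<lambda>i. snd W i - (\<eta> * v * (if inner (snd W i) x \<ge> 0 then 1 else \<alpha>) * y) *\<^sub>R x)))"

fun sgd :: "nat \<Rightarrow> real \<Rightarrow> real \<Rightarrow> real \<Rightarrow> (nat \<Rightarrow> 'a::real_inner) \<Rightarrow> (nat \<Rightarrow> real)
            \<Rightarrow> (nat \<Rightarrow> nat) \<Rightarrow> 'a weights \<Rightarrow> nat \<Rightarrow> 'a weights" where
  "sgd k \<alpha> v \<eta> xs ys c W0 0 = W0"
| "sgd k \<alpha> v \<eta> xs ys c W0 (Suc t) =
     sgd_step k \<alpha> v \<eta> (sgd k \<alpha> v \<eta> xs ys c W0 t) (xs (c (Suc t))) (ys (c (Suc t)))"

definition nonzero_updates :: "nat \<Rightarrow> real \<Rightarrow> real \<Rightarrow> real \<Rightarrow> (nat \<Rightarrow> 'a::real_inner) \<Rightarrow> (nat \<Rightarrow> real)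
            \<Rightarrow> (nat \<Rightarrow> nat) \<Rightarrow> 'a weights \<Rightarrow> nat set" where
  "nonzero_updates k \<alpha> v \<eta> xs ys c W0 =
     {t. t \<ge> 1 \<and> ys (c t) * net k \<alpha> v (sgd k \<alpha> v \<eta> xs ys c W0 (t - 1)) (xs (c t)) < 1}"

definition bound_Mk :: "nat \<Rightarrow> real \<Rightarrow> real \<Rightarrow> real \<Rightarrow> real \<Rightarrow> real \<Rightarrow> real" where
  "bound_Mk k \<alpha> v \<eta> R B =
     B^2 / \<alpha>^2 + B^2 / (real k * \<eta> * v^2 * \<alpha>^2)
     + sqrt (R * (8 * (real k)^2 * \<eta>^2 * v^2 + 8 * \<eta> * real k)) * B powr (3/2)
         / (2 * real k * (\<eta> * v * \<alpha>) powr (3/2))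
     + 2 * R * B / (\<eta> * v * \<alpha>)"

end

theory Submission
  imports Defs
begin

definition Pf :: "nat \<Rightarrow> 'a::real_inner \<Rightarrow> 'a weights \<Rightarrow> real" where
  "Pf k ws W = (\<Sum>i<k. inner (fst W i) ws - inner (snd W i) ws)"

definition Qf :: "nat \<Rightarrow> 'a::real_inner weights \<Rightarrow> real" where
  "Qf k W = (\<Sum>i<k. norm (fst W i)^2 + norm (snd W i)^2)"

lemma lr_eq: "0 < \<alpha> \<Longrightarrow> \<alpha> < 1 \<Longrightarrow> (if z \<ge> 0 then 1 else \<alpha>) * z = leaky_relu \<alpha> z"
  unfolding leaky_relu_def max_def
  by (auto simp: mult_le_cancel_right1 not_le mult_less_cancel_right1) 

lemma norm_add_sq: "norm (a + b)^2 = norm a^2 + 2 * inner a b + norm (b::'a::real_inner)^2"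
  by (simp add: power2_norm_eq_inner inner_add_left inner_add_right inner_commute)

lemma norm_diff_sq: "norm (a - b)^2 = norm a^2 - 2 * inner a b + norm (b::'a::real_inner)^2"
  by (simp add: power2_norm_eq_inner inner_diff_left inner_diff_right inner_commute)

lemma step_P:
  fixes x ws :: "'a::real_inner"
  assumes "y * net k \<alpha> v W x < 1" "y * inner ws x \<ge> 1"
    "0 < \<alpha>" "\<alpha> < 1" "v > 0" "\<eta> > 0"
  shows "Pf k ws (sgd_step k \<alpha> v \<eta> W x y) \<ge> Pf k ws W + 2 * real k * (\<eta> * v * \<alpha>)"
proof -
  have trm: "inner (fst W i) ws - inner (snd W i) ws + 2 * (\<eta> * v * \<alpha>)
     \<le> inner (fst W i + (\<eta> * v * s * y) *\<^sub>R x) ws - inner (snd W i - (\<eta> * v * r * y) *\<^sub>R x) ws"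
    if "s \<ge> \<alpha>" "r \<ge> \<alpha>" for i s r
  proof -
    have e: "inner (fst W i + (\<eta> * v * s * y) *\<^sub>R x) ws - inner (snd W i - (\<eta> * v * r * y) *\<^sub>R x) ws
      = inner (fst W i) ws - inner (snd W i) ws + (\<eta> * v * s) * (y * inner ws x) + (\<eta> * v * r) * (y * inner ws x)"
      by (simp add: inner_add_left inner_diff_left inner_commute algebra_simps)
    have ev: "\<eta> * v > 0" using assms by simp
    have a1: "(\<eta> * v * s) * (y * inner ws x) \<ge> \<eta> * v * \<alpha>"
    proof -
      have "(\<eta> * v * s) * (y * inner ws x) \<ge> (\<eta> * v * s) * 1"
        using assms(2) ev that assms(3) by (intro mult_left_mono) auto
      moreover have "\<eta> * v * s \<ge> \<eta> * v * \<alpha>" using ev that by (intro mult_left_mono) auto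
      ultimately show ?thesis by simp
    qed
    have a2: "(\<eta> * v * r) * (y * inner ws x) \<ge> \<eta> * v * \<alpha>"
    proof -
      have "(\<eta> * v * r) * (y * inner ws x) \<ge> (\<eta> * v * r) * 1"
        using assms(2) ev that assms(3) by (intro mult_left_mono) auto
      moreover have "\<eta> * v * r \<ge> \<eta> * v * \<alpha>" using ev that by (intro mult_left_mono) auto
      ultimately show ?thesis by simp
    qed
    show ?thesis using e a1 a2 by linarith
  qed
  have "Pf k ws W + 2 * real k * (\<eta> * v * \<alpha>) = (\<Sum>i<k. inner (fst W i) ws - inner (snd W i) ws + 2 * (\<eta> * v * \<alpha>))"
    by (simp add: Pf_def sum.distrib)
  also have "\<dots> \<le> Pf k ws (sgd_step k \<alpha> v \<eta> W x y)"
    unfolding Pf_def sgd_step_def using assms(1) assms(3,4)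
    by (auto intro!: sum_mono trm)
  finally show ?thesis .
qed

lemma step_Q:
  fixes x :: "'a::real_inner"
  assumes "y * net k \<alpha> v W x < 1" "y = 1 \<or> y = -1" "norm x \<le> 1"
    "0 < \<alpha>" "\<alpha> < 1" "v > 0" "\<eta> > 0"
  shows "Qf k (sgd_step k \<alpha> v \<eta> W x y) \<le> Qf k W + (2 * \<eta> + 2 * real k * (\<eta>^2 * v^2))"
proof -
  let ?s = "\<lambda>i. if inner (fst W i) x \<ge> 0 then 1 else \<alpha>"
  let ?r = "\<lambda>i. if inner (snd W i) x \<ge> 0 then 1 else \<alpha>"
  have y2: "y^2 = 1" using assms(2) by auto
  have nx: "norm x ^ 2 \<le> 1" using assms(3) by (simp add: power_le_one)
  have sq: "(\<eta> * v * t * y)^2 * norm x ^2 \<le> \<eta>^2 * v^2" if "\<alpha> \<le> t" "t \<le> 1" for t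
  proof -
    have t2: "t^2 \<le> 1" using that assms(4) by (simp add: power_le_one)
    have "(\<eta> * v * t * y)^2 * norm x ^2 = (\<eta>^2 * v^2) * (t^2 * norm x ^2)"
      using y2 by (simp add: power_mult_distrib)
    also have "\<dots> \<le> (\<eta>^2 * v^2) * 1"
      using t2 nx by (intro mult_left_mono) (auto simp: mult_le_one)
    finally show ?thesis by simp
  qed
  have trm: "norm (fst W i + (\<eta> * v * ?s i * y) *\<^sub>R x)^2 + norm (snd W i - (\<eta> * v * ?r i * y) *\<^sub>R x)^2
     \<le> (norm (fst W i)^2 + norm (snd W i)^2) + 2 * \<eta> * y * (v * leaky_relu \<alpha> (inner (fst W i) x) + (- v) * leaky_relu \<alpha> (inner (snd W i) x))
       + 2 * (\<eta>^2 * v^2)" for i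
  proof -
    have e1: "norm (fst W i + (\<eta> * v * ?s i * y) *\<^sub>R x)^2 = norm (fst W i)^2
       + 2 * \<eta> * y * v * (?s i * inner (fst W i) x) + (\<eta> * v * ?s i * y)^2 * norm x ^2"
      by (simp add: norm_add_sq power_mult_distrib algebra_simps)
    have e2: "norm (snd W i - (\<eta> * v * ?r i * y) *\<^sub>R x)^2 = norm (snd W i)^2
       - 2 * \<eta> * y * v * (?r i * inner (snd W i) x) + (\<eta> * v * ?r i * y)^2 * norm x ^2"
      by (simp add: norm_diff_sq power_mult_distrib algebra_simps)
    have l1: "?s i * inner (fst W i) x = leaky_relu \<alpha> (inner (fst W i) x)"
      using lr_eq[OF assms(4,5)] by blast
    have l2: "?r i * inner (snd W i) x = leaky_relu \<alpha> (inner (snd W i) x)"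
      using lr_eq[OF assms(4,5)] by blast
    have b1: "(\<eta> * v * ?s i * y)^2 * norm x ^2 \<le> \<eta>^2 * v^2"
      by (rule sq) (use assms(5) in auto)
    have b2: "(\<eta> * v * ?r i * y)^2 * norm x ^2 \<le> \<eta>^2 * v^2"
      by (rule sq) (use assms(5) in auto)
    show ?thesis using e1 e2 l1 l2 b1 b2 by (simp add: algebra_simps)
  qed
  have "Qf k (sgd_step k \<alpha> v \<eta> W x y) \<le> (\<Sum>i<k. (norm (fst W i)^2 + norm (snd W i)^2) + 2 * \<eta> * y * (v * leaky_relu \<alpha> (inner (fst W i) x) + (- v) * leaky_relu \<alpha> (inner (snd W i) x))
       + 2 * (\<eta>^2 * v^2))"
  proof -
    have st: "sgd_step k \<alpha> v \<eta> W x y = ((\<lambda>i. fst W i + (\<eta> * v * ?s i * y) *\<^sub>R x),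
            (\<lambda>i. snd W i - (\<eta> * v * ?r i * y) *\<^sub>R x))"
      using assms(1) by (simp add: sgd_step_def)
    show ?thesis unfolding Qf_def st fst_conv snd_conv by (rule sum_mono[OF trm])
  qed
  also have "\<dots> = Qf k W + 2 * \<eta> * (y * net k \<alpha> v W x) + 2 * real k * (\<eta>^2 * v^2)"
  proof -
    have n: "net k \<alpha> v W x = (\<Sum>i<k. v * leaky_relu \<alpha> (inner (fst W i) x) + (- v) * leaky_relu \<alpha> (inner (snd W i) x))"
      unfolding net_def by (simp only: sum.distrib)
    show ?thesis unfolding n Qf_def
      by (simp only: sum.distrib sum_distrib_left mult.assoc sum_constant) (simp add: sum_subtractf sum_negf flip: sum_distrib_left)
  qed
  also have "\<dots> \<le> Qf k W + (2 * \<eta> + 2 * real k * (\<eta>^2 * v^2))"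
    using assms(1,7) by simp
  finally show ?thesis .
qed

lemma P_sq:
  fixes ws :: "'a::real_inner"
  assumes "0 \<le> Pf k ws W"
  shows "(Pf k ws W)^2 \<le> 2 * real k * norm ws ^ 2 * Qf k W"
proof -
  let ?S = "\<Sum>i<k. norm (fst W i) + norm (snd W i)"
  have "Pf k ws W \<le> (\<Sum>i<k. norm ws * (norm (fst W i) + norm (snd W i)))"
    unfolding Pf_def
  proof (rule sum_mono)
    fix i
    have "inner (fst W i) ws \<le> norm (fst W i) * norm ws" by (rule norm_cauchy_schwarz)
    moreover have "- inner (snd W i) ws \<le> norm (snd W i) * norm ws"
      using norm_cauchy_schwarz[of "- snd W i" ws] by simp
    ultimately show "inner (fst W i) ws - inner (snd W i) ws \<le> norm ws * (norm (fst W i) + norm (snd W i))"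
      by (simp add: algebra_simps)
  qed
  also have "\<dots> = norm ws * ?S" by (simp add: sum_distrib_left)
  finally have le: "Pf k ws W \<le> norm ws * ?S" .
  have S2: "?S^2 \<le> 2 * real k * Qf k W"
  proof -
    have "?S^2 \<le> (\<Sum>i<k. (norm (fst W i) + norm (snd W i))^2) * real k"
      using sum_squared_le_sum_of_squares[of "\<lambda>i. norm (fst W i) + norm (snd W i)" "{..<k}"] by simp
    also have "\<dots> \<le> (\<Sum>i<k. 2 * (norm (fst W i)^2 + norm (snd W i)^2)) * real k"
    proof (intro mult_right_mono sum_mono)
      fix i
      show "(norm (fst W i) + norm (snd W i))^2 \<le> 2 * (norm (fst W i)^2 + norm (snd W i)^2)"
        by (smt (verit, best) power2_sum zero_le_power2 power2_diff)
    qed simp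
    also have "\<dots> = 2 * real k * Qf k W" by (simp add: Qf_def sum_distrib_left algebra_simps)
    finally show ?thesis .
  qed
  have "(Pf k ws W)^2 \<le> (norm ws * ?S)^2"
    using le assms by (intro power_mono) auto
  also have "\<dots> = norm ws ^ 2 * ?S^2" by (simp add: power_mult_distrib)
  also have "\<dots> \<le> norm ws ^ 2 * (2 * real k * Qf k W)" using S2 by (intro mult_left_mono) auto
  finally show ?thesis by (simp add: algebra_simps)
qed

lemma P0:
  fixes ws :: "'a::real_inner"
  assumes "\<forall>i<k. norm (fst W i) \<le> R \<and> norm (snd W i) \<le> R"
  shows "Pf k ws W \<ge> - (2 * real k * R * norm ws)"
proof -
  have "(\<Sum>i<k. - (2 * R * norm ws)) \<le> Pf k ws W"
    unfolding Pf_def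
  proof (rule sum_mono)
    fix i assume "i \<in> {..<k}"
    then have h: "norm (fst W i) \<le> R" "norm (snd W i) \<le> R" using assms by auto
    have "\<bar>inner (fst W i) ws\<bar> \<le> norm (fst W i) * norm ws" by (rule Cauchy_Schwarz_ineq2)
    also have "\<dots> \<le> R * norm ws" using h by (intro mult_right_mono) auto
    finally have 1: "\<bar>inner (fst W i) ws\<bar> \<le> R * norm ws" .
    have "\<bar>inner (snd W i) ws\<bar> \<le> norm (snd W i) * norm ws" by (rule Cauchy_Schwarz_ineq2)
    also have "\<dots> \<le> R * norm ws" using h by (intro mult_right_mono) auto
    finally have 2: "\<bar>inner (snd W i) ws\<bar> \<le> R * norm ws" .
    show "- (2 * R * norm ws) \<le> inner (fst W i) ws - inner (snd W i) ws" using 1 2 by linarith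
  qed
  then show ?thesis by simp
qed

lemma Q0:
  assumes "\<forall>i<k. norm (fst W i) \<le> R \<and> norm (snd W i) \<le> R"
  shows "Qf k W \<le> 2 * real k * R^2"
proof -
  have "Qf k W \<le> (\<Sum>i<k. 2 * R^2)"
    unfolding Qf_def
  proof (rule sum_mono)
    fix i assume "i \<in> {..<k}"
    then have h: "norm (fst W i) \<le> R" "norm (snd W i) \<le> R" using assms by auto
    have "norm (fst W i)^2 \<le> R^2" using h by (intro power_mono) auto
    moreover have "norm (snd W i)^2 \<le> R^2" using h by (intro power_mono) auto
    ultimately show "norm (fst W i)^2 + norm (snd W i)^2 \<le> 2 * R^2" by simp
  qed
  then show ?thesis by simp
qed

lemma arith_bound:
  fixes K a m B R P e c :: real
  assumes K: "K \<ge> 1" and a: "a > 0" and m: "m \<ge> 0" and B: "B \<ge> 0" and R: "R > 0"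
    and c: "c = 2 * e + 2 * K * f" and e: "e > 0" and f: "f \<ge> 0"
    and lo: "P \<ge> - (2 * K * R * B) + m * (2 * K * a)"
    and hi: "0 \<le> P \<Longrightarrow> P^2 \<le> 2 * K * B^2 * (2 * K * R^2 + m * c)"
  shows "m \<le> 2 * R * B / a + B^2 * ((e + K * f) / K) / a^2"
proof -
  define E where "E = (e + K * f) / K"
  have E0: "E \<ge> 0" using K e f unfolding E_def by simp
  have t2: "0 \<le> B^2 * E / a^2" using E0 a by simp
  have "m \<le> 2 * R * B / a + B^2 * E / a^2"
  proof (cases "m * a \<le> R * B")
    case True
    then have "m \<le> R * B / a" using a by (simp add: pos_le_divide_eq mult.commute)
    moreover have "R * B / a \<le> 2 * R * B / a" using R B a by (simp add: divide_right_mono)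
    ultimately show ?thesis using t2 by linarith
  next
    case False
    then have mp: "m > 0" using R B a by (smt (verit) mult_nonneg_nonneg mult_nonpos_nonneg)
    define D where "D = 2 * K * (m * a - R * B)"
    have D0: "D > 0" using False K unfolding D_def by simp
    have DP: "D \<le> P" using lo unfolding D_def by (simp add: algebra_simps)
    then have "D^2 \<le> P^2" using D0 by (intro power_mono) auto
    also have "\<dots> \<le> 2 * K * B^2 * (2 * K * R^2 + m * c)" using hi DP D0 by simp
    also have "2 * K * B^2 * (2 * K * R^2 + m * c) = 4 * K^2 * (B^2 * R^2 + B^2 * m * E)"
      unfolding E_def c using K by (simp add: field_simps power2_eq_square)
    also have "D^2 = 4 * K^2 * (m * a - R * B)^2" unfolding D_def by (simp add: power_mult_distrib)
    finally have "4 * K^2 * (m * a - R * B)^2 \<le> 4 * K^2 * (B^2 * R^2 + B^2 * m * E)" .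
    then have "(m * a - R * B)^2 \<le> B^2 * R^2 + B^2 * m * E" using K by simp
    then have "m * (a^2 * m) \<le> m * (2 * a * R * B + B^2 * E)"
      by (simp add: power2_eq_square algebra_simps)
    then have "a^2 * m \<le> 2 * a * R * B + B^2 * E" using mp by simp
    then have "m \<le> (2 * a * R * B + B^2 * E) / a^2" using a by (simp add: pos_le_divide_eq mult.commute)
    also have "\<dots> = 2 * R * B / a + B^2 * E / a^2" using a by (simp add: field_simps power2_eq_square)
    finally show ?thesis .
  qed
  then show ?thesis unfolding E_def .
qed

lemma sgd_Suc_A:
  "Suc t \<in> nonzero_updates k \<alpha> v \<eta> xs ys c W0 \<longleftrightarrow>
     ys (c (Suc t)) * net k \<alpha> v (sgd k \<alpha> v \<eta> xs ys c W0 t) (xs (c (Suc t))) < 1"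
  by (simp add: nonzero_updates_def)

lemma A_inter_Suc:
  "A \<inter> {..Suc t} = (A \<inter> {..t}) \<union> (if Suc t \<in> A then {Suc t} else {})"
  by (auto simp: le_Suc_eq)

theorem theorem1:
  fixes xs :: "nat \<Rightarrow> 'a::euclidean_space" and ys :: "nat \<Rightarrow> real"
    and wstar :: 'a and W0 :: "'a weights" and c :: "nat \<Rightarrow> nat"
    and n k :: nat and \<alpha> v \<eta> R :: real
  assumes "k \<ge> 1" and "0 < \<alpha>" and "\<alpha> < 1" and "v > 0" and "\<eta> > 0" and "R > 0"
    and "\<forall>i<n. norm (xs i) \<le> 1"
    and "\<forall>i<n. ys i = 1 \<or> ys i = -1"
    and "\<forall>i<n. ys i * inner wstar (xs i) \<ge> 1"
    and "\<forall>t. c t < n"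
    and "\<forall>i<k. norm (fst W0 i) \<le> R \<and> norm (snd W0 i) \<le> R"
  shows "finite (nonzero_updates k \<alpha> v \<eta> xs ys c W0)
       \<and> real (card (nonzero_updates k \<alpha> v \<eta> xs ys c W0)) \<le> bound_Mk k \<alpha> v \<eta> R (norm wstar)
       \<and> ((\<forall>i<n. \<forall>T. \<exists>t\<ge>T. c t = i) \<longrightarrow>
          (\<exists>T. \<forall>t\<ge>T. sgd k \<alpha> v \<eta> xs ys c W0 t = sgd k \<alpha> v \<eta> xs ys c W0 T
              \<and> (\<forall>W'. loss k \<alpha> v n xs ys (sgd k \<alpha> v \<eta> xs ys c W0 t) \<le> loss k \<alpha> v n xs ys W')))"
proof -
  define W where "W = sgd k \<alpha> v \<eta> xs ys c W0"
  define A where "A = nonzero_updates k \<alpha> v \<eta> xs ys c W0"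
  define a where "a = \<eta> * v * \<alpha>"
  define cc where "cc = 2 * \<eta> + 2 * real k * (\<eta>^2 * v^2)"
  define B where "B = norm wstar"
  define M where "M = bound_Mk k \<alpha> v \<eta> R B"
  have a0: "a > 0" using assms unfolding a_def by simp
  have WS: "W (Suc t) = sgd_step k \<alpha> v \<eta> (W t) (xs (c (Suc t))) (ys (c (Suc t)))" for t
    by (simp add: W_def)
  have SA: "Suc t \<in> A \<longleftrightarrow> ys (c (Suc t)) * net k \<alpha> v (W t) (xs (c (Suc t))) < 1" for t
    by (simp add: A_def W_def sgd_Suc_A)
  have A0: "0 \<notin> A" by (simp add: A_def nonzero_updates_def)
  have inv: "Pf k wstar (W t) \<ge> Pf k wstar W0 + real (card (A \<inter> {..t})) * (2 * real k * a)
           \<and> Qf k (W t) \<le> Qf k W0 + real (card (A \<inter> {..t})) * cc" for t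
  proof (induction t)
    case 0
    have "A \<inter> {..0} = {}" using A0 by auto
    then show ?case by (simp add: W_def)
  next
    case (Suc t)
    let ?x = "xs (c (Suc t))" and ?y = "ys (c (Suc t))"
    have ci: "c (Suc t) < n" using assms(10) by simp
    show ?case
    proof (cases "Suc t \<in> A")
      case True
      have card: "card (A \<inter> {..Suc t}) = Suc (card (A \<inter> {..t}))"
        unfolding A_inter_Suc using True by simp
      have lt: "?y * net k \<alpha> v (W t) ?x < 1" using True SA by simp
      have p: "Pf k wstar (W (Suc t)) \<ge> Pf k wstar (W t) + 2 * real k * a"
        unfolding WS a_def
        by (rule step_P[OF lt]) (use assms ci in \<open>auto simp: inner_commute\<close>)
      have q: "Qf k (W (Suc t)) \<le> Qf k (W t) + cc"
        unfolding WS cc_def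
        by (rule step_Q[OF lt]) (use assms ci in auto)
      show ?thesis using Suc.IH p q card by (simp add: algebra_simps)
    next
      case False
      have card: "card (A \<inter> {..Suc t}) = card (A \<inter> {..t})"
        unfolding A_inter_Suc using False by simp
      have "W (Suc t) = W t" using False SA unfolding WS sgd_step_def by simp
      then show ?thesis using Suc.IH card by simp
    qed
  qed
  have bnd: "real (card (A \<inter> {..t})) \<le> M" for t
  proof -
    let ?m = "real (card (A \<inter> {..t}))"
    have m1: "?m \<le> 2 * R * B / a + B^2 * ((\<eta> + real k * (\<eta>^2 * v^2)) / real k) / a^2"
    proof (rule arith_bound[where P = "Pf k wstar (W t)" and c = cc])
      show "real k \<ge> 1" using assms(1) by simp
      show "a > 0" by (rule a0)
      show "B \<ge> 0" by (simp add: B_def)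
      show "R > 0" by (rule assms(6))
      show "cc = 2 * \<eta> + 2 * real k * (\<eta>^2 * v^2)" by (simp add: cc_def)
      show "\<eta> > 0" by (rule assms(5))
      show "\<eta>^2 * v^2 \<ge> 0" by simp
      show "Pf k wstar (W t) \<ge> - (2 * real k * R * B) + ?m * (2 * real k * a)"
        using inv[of t] P0[OF assms(11), of wstar] unfolding B_def by linarith
      assume "0 \<le> Pf k wstar (W t)"
      then have "(Pf k wstar (W t))^2 \<le> 2 * real k * B^2 * Qf k (W t)"
        using P_sq unfolding B_def by blast
      also have "\<dots> \<le> 2 * real k * B^2 * (2 * real k * R^2 + ?m * cc)"
        using inv[of t] Q0[OF assms(11)] by (intro mult_left_mono) auto
      finally show "(Pf k wstar (W t))^2 \<le> 2 * real k * B^2 * (2 * real k * R^2 + ?m * cc)" .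
    qed simp
    have eq: "B^2 * ((\<eta> + real k * (\<eta>^2 * v^2)) / real k) / a^2
       = B^2 / \<alpha>^2 + B^2 / (real k * \<eta> * v^2 * \<alpha>^2)"
      using assms(1,2,4,5) unfolding a_def by (simp add: field_simps power2_eq_square)
    have nn: "0 \<le> sqrt (R * (8 * (real k)^2 * \<eta>^2 * v^2 + 8 * \<eta> * real k)) * B powr (3/2)
         / (2 * real k * (\<eta> * v * \<alpha>) powr (3/2))"
      using assms(1,2,4,5,6) by (intro divide_nonneg_nonneg mult_nonneg_nonneg) auto
    have "2 * R * B / a = 2 * R * B / (\<eta> * v * \<alpha>)" by (simp add: a_def)
    then show ?thesis using m1 eq nn unfolding M_def bound_Mk_def by linarith
  qed
  have finA: "finite A"
  proof (rule ccontr)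
    assume "infinite A"
    then obtain F where F: "F \<subseteq> A" "finite F" "card F = nat \<lceil>M\<rceil> + 1"
      using infinite_arbitrarily_large by blast
    then have "F \<noteq> {}" by auto
    then have "F \<subseteq> A \<inter> {..Max F}" using F by auto
    then have "card F \<le> card (A \<inter> {..Max F})" by (intro card_mono) auto
    then have "real (card F) \<le> M" using bnd[of "Max F"] by linarith
    moreover have "real (card F) > M" using F(3) by linarith
    ultimately show False by simp
  qed
  define T0 where "T0 = (if A = {} then 0 else Max A)"
  have AT0: "A \<inter> {..T0} = A" using finA unfolding T0_def by auto
  have cardA: "real (card A) \<le> M" using bnd[of T0] AT0 by simp
  have const: "W (T0 + d) = W T0" for d
  proof (induction d)
    case (Suc d)
    have "Suc (T0 + d) \<notin> A"
    proof
      assume h: "Suc (T0 + d) \<in> A"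
      then have "A \<noteq> {}" by auto
      then have "T0 = Max A" unfolding T0_def by simp
      moreover have "Suc (T0 + d) \<le> Max A" using Max_ge[OF finA h] .
      ultimately have "Suc (T0 + d) \<le> T0" by simp
      then show False by simp
    qed
    then have "W (Suc (T0 + d)) = W (T0 + d)" using SA unfolding WS sgd_step_def by simp
    then show ?case using Suc.IH by simp
  qed simp
  have const': "W t = W T0" if "t \<ge> T0" for t
    using const[of "t - T0"] that by simp
  have part3: "(\<forall>i<n. \<forall>T. \<exists>t\<ge>T. c t = i) \<longrightarrow>
          (\<exists>T. \<forall>t\<ge>T. W t = W T \<and> (\<forall>W'. loss k \<alpha> v n xs ys (W t) \<le> loss k \<alpha> v n xs ys W'))"
  proof
    assume inf: "\<forall>i<n. \<forall>T. \<exists>t\<ge>T. c t = i"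
    have good: "ys i * net k \<alpha> v (W T0) (xs i) \<ge> 1" if "i < n" for i
    proof -
      have ex: "\<exists>t\<ge>Suc T0. c t = i" using inf that by simp
      then obtain t where t1: "t \<ge> Suc T0" and t2: "c t = i" by blast
      define t' where "t' = t - 1"
      have tt: "t = Suc t'" using t1 unfolding t'_def by simp
      have tT: "t' \<ge> T0" using t1 unfolding t'_def by simp
      have "Suc t' \<notin> A"
      proof
        assume h: "Suc t' \<in> A"
        then have "A \<noteq> {}" by auto
        then have "T0 = Max A" unfolding T0_def by simp
        moreover have "Suc t' \<le> Max A" using Max_ge[OF finA h] .
        ultimately show False using tT by linarith
      qed
      then have g: "ys (c (Suc t')) * net k \<alpha> v (W t') (xs (c (Suc t'))) \<ge> 1" using SA[of t'] by linarith
      have e: "W t' = W T0" using const' tT by blast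
      have ci: "c (Suc t') = i" using t2 tt by simp
      show ?thesis using g unfolding e ci .
    qed
    have l0: "loss k \<alpha> v n xs ys (W T0) = 0"
      unfolding loss_def using good by (simp add: sum.neutral)
    have lnn: "loss k \<alpha> v n xs ys W' \<ge> 0" for W'
      unfolding loss_def by (intro mult_nonneg_nonneg sum_nonneg) auto
    show "\<exists>T. \<forall>t\<ge>T. W t = W T \<and> (\<forall>W'. loss k \<alpha> v n xs ys (W t) \<le> loss k \<alpha> v n xs ys W')"
    proof (intro exI[of _ T0] allI impI conjI)
      fix t W' assume "T0 \<le> t"
      then have e: "W t = W T0" by (rule const')
      then show "W t = W T0" .
      show "loss k \<alpha> v n xs ys (W t) \<le> loss k \<alpha> v n xs ys W'" unfolding e l0 by (rule lnn)
    qed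
  qed
  show ?thesis using finA cardA part3 unfolding A_def M_def B_def W_def by blast
qed

end
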